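(* If $X$ is a closed convex subset of $\mathbb{R}^n$, then $\mathit{HM}_1(X)=0$.
   Context: $X$ carries the Euclidean (subspace) metric. For a metric space $X$, the magnitude homology $\mathit{HM}^\ell_k(X)$ is the degree-$k$ homology of the chain complex whose $k$-chains in grading $\ell$ are the free abelian group on symbols $\langle x_0,\dots,x_k\rangle$ with $x_i\neq x_{i+1}$ and $d(x_0,x_1)+\cdots+d(x_{k-1},x_k)=\ell$, with boundary $\sum_i(-1)^i d^i$, where $d^i$ deletes $x_i$ if $d(x_{i-1},x_i)+d(x_i,x_{i+1})=d(x_{i-1},x_{i+1})$ and is $0$ otherwise (deleting an endpoint always gives $0$); $\mathit{HM}_1(X)=0$ means $\mathit{HM}^\ell_1(X)=0$ for all $\ell$. *)

theory Defs
  imports "HOL-Analysis.Analysis"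
begin

text \<open>Magnitude homology of a metric space (here: a subset X of a metric space,
with the subspace metric).\<close>

definition mag_gen :: "'a::metric_space set \<Rightarrow> nat \<Rightarrow> real \<Rightarrow> 'a list \<Rightarrow> bool" where
  "mag_gen X k l xs \<longleftrightarrow> length xs = k + 1 \<and> set xs \<subseteq> X \<and>
     (\<forall>i<k. xs ! i \<noteq> xs ! Suc i) \<and> (\<Sum>i<k. dist (xs ! i) (xs ! Suc i)) = l"

definition mag_chain :: "'a::metric_space set \<Rightarrow> nat \<Rightarrow> real \<Rightarrow> ('a list \<Rightarrow> int) \<Rightarrow> bool" where
  "mag_chain X k l c \<longleftrightarrow> finite {xs. c xs \<noteq> 0} \<and> (\<forall>xs. c xs \<noteq> 0 \<longrightarrow> mag_gen X k l xs)"

definition face :: "nat \<Rightarrow> 'a list \<Rightarrow> 'a list" where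
  "face i xs = take i xs @ drop (Suc i) xs"

definition bdry_coeff :: "'a::metric_space list \<Rightarrow> 'a list \<Rightarrow> int" where
  "bdry_coeff xs ys = (\<Sum>i\<in>{i. 0 < i \<and> i + 1 < length xs \<and>
       dist (xs ! (i - 1)) (xs ! i) + dist (xs ! i) (xs ! (i + 1)) = dist (xs ! (i - 1)) (xs ! (i + 1)) \<and>
       face i xs = ys}. (-1) ^ i)"

definition mag_boundary :: "('a::metric_space list \<Rightarrow> int) \<Rightarrow> 'a list \<Rightarrow> int" where
  "mag_boundary c ys = (\<Sum>xs\<in>{xs. c xs \<noteq> 0}. c xs * bdry_coeff xs ys)"

definition HM_vanishes :: "'a::metric_space set \<Rightarrow> nat \<Rightarrow> real \<Rightarrow> bool" where
  "HM_vanishes X k l \<longleftrightarrow> (\<forall>c. mag_chain X k l c \<and> mag_boundary c = (\<lambda>_. 0) \<longrightarrow>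
      (\<exists>b. mag_chain X (Suc k) l b \<and> mag_boundary b = c))"

end

theory Submission
  imports Defs
begin

lemma bdry3:
  fixes a m b :: "'a::metric_space"
  shows "bdry_coeff [a,m,b] ys = (if dist a m + dist m b = dist a b \<and> ys = [a,b] then -1 else 0)"
proof -
  have fc: "face 1 [a,m,b] = [a,b]" by (simp add: face_def)
  have "{i. 0 < i \<and> i + 1 < length [a,m,b] \<and>
       dist ([a,m,b] ! (i - 1)) ([a,m,b] ! i) + dist ([a,m,b] ! i) ([a,m,b] ! (i + 1)) = dist ([a,m,b] ! (i - 1)) ([a,m,b] ! (i + 1)) \<and>
       face i [a,m,b] = ys} = (if dist a m + dist m b = dist a b \<and> ys = [a,b] then {1} else {})"
  proof (rule set_eqI)
    fix i :: nat
    show "i \<in> {i. 0 < i \<and> i + 1 < length [a,m,b] \<and>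
       dist ([a,m,b] ! (i - 1)) ([a,m,b] ! i) + dist ([a,m,b] ! i) ([a,m,b] ! (i + 1)) = dist ([a,m,b] ! (i - 1)) ([a,m,b] ! (i + 1)) \<and>
       face i [a,m,b] = ys} \<longleftrightarrow> i \<in> (if dist a m + dist m b = dist a b \<and> ys = [a,b] then {1} else {})"
    proof (cases "i = 1")
      case True
      then show ?thesis using fc by auto
    next
      case False
      then have "\<not> (0 < i \<and> i + 1 < length [a,m,b])" by (simp add: less_Suc_eq; linarith)
      then show ?thesis using False by auto
    qed
  qed
  then show ?thesis unfolding bdry_coeff_def by simp
qed

theorem corollary7p10:
  fixes X :: "(real ^ 'n) set"
  assumes "closed X" and "convex X"
  shows "\<forall>l. HM_vanishes X 1 l"
proof (intro allI, unfold HM_vanishes_def, intro allI impI)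
  fix l and c :: "(real ^ 'n) list \<Rightarrow> int"
  assume "mag_chain X 1 l c \<and> mag_boundary c = (\<lambda>_. 0)"
  then have fin: "finite {xs. c xs \<noteq> 0}" and gen: "\<And>xs. c xs \<noteq> 0 \<Longrightarrow> mag_gen X 1 l xs"
    by (auto simp: mag_chain_def)
  define S where "S = {xs. c xs \<noteq> 0}"
  define f where "f xs = [xs!0, midpoint (xs!0) (xs!1), xs!1]" for xs :: "(real ^ 'n) list"
  define b where "b zs = (if length zs = 3 \<and> zs!1 = midpoint (zs!0) (zs!2) then - c [zs!0, zs!2] else 0)"
    for zs :: "(real ^ 'n) list"
  have S2: "xs \<in> S \<Longrightarrow> xs = [xs!0, xs!1]" for xs
  proof -
    assume "xs \<in> S"
    then have "length xs = 2" using gen[of xs] by (auto simp: S_def mag_gen_def)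
    then show ?thesis
      by (cases xs; cases "tl xs"; auto)
  qed
  have bf: "xs \<in> S \<Longrightarrow> b (f xs) = - c xs" for xs
    using S2[of xs] by (simp add: b_def f_def numeral_3_eq_3)
  have suppb: "{zs. b zs \<noteq> 0} = f ` S"
  proof safe
    fix zs assume "b zs \<noteq> 0"
    then have l3: "length zs = 3" and m: "zs!1 = midpoint (zs!0) (zs!2)" and cz: "c [zs!0, zs!2] \<noteq> 0"
      by (auto simp: b_def split: if_splits)
    have "zs = [zs!0, zs!1, zs!2]" using l3
      by (cases zs; cases "tl zs"; cases "tl (tl zs)"; auto simp: numeral_3_eq_3)
    then have "zs = f [zs!0, zs!2]" using m by (simp add: f_def)
    moreover have "[zs!0, zs!2] \<in> S" using cz by (simp add: S_def)
    ultimately show "zs \<in> f ` S" by blast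
  next
    fix xs assume "xs \<in> S" "b (f xs) = 0"
    then show False using bf[of xs] by (simp add: S_def)
  qed
  have injf: "inj_on f S"
  proof (rule inj_onI)
    fix x y assume "x \<in> S" "y \<in> S" "f x = f y"
    then show "x = y" using S2[of x] S2[of y] by (simp add: f_def)
  qed
  have genf: "xs \<in> S \<Longrightarrow> mag_gen X (Suc 1) l (f xs)" for xs
  proof -
    assume xs: "xs \<in> S"
    then have g: "mag_gen X 1 l xs" using gen by (simp add: S_def)
    have e: "xs = [xs!0, xs!1]" using S2 xs by blast
    define p q where "p = xs!0" and "q = xs!1"
    have xe: "xs = [p, q]" using e by (simp add: p_def q_def)
    have pq: "p \<in> X" "q \<in> X" "p \<noteq> q" "dist p q = l"
      using g unfolding xe mag_gen_def by auto
    have mX: "midpoint p q \<in> X"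
    proof -
      have "closed_segment p q \<subseteq> X" using assms(2) pq(1,2) by (simp add: convex_contains_segment)
      then show ?thesis using midpoint_in_closed_segment[of p q] by (rule subsetD)
    qed
    have mpq: "p \<noteq> midpoint p q" "midpoint p q \<noteq> q" using pq(3) by (metis midpoint_eq_endpoint)+
    have fx: "f xs = [p, midpoint p q, q]" by (simp add: f_def xe)
    have "\<forall>i<2. f xs ! i \<noteq> f xs ! Suc i"
      using pq(3) mpq unfolding fx by (auto simp: f_def p_def[symmetric] q_def[symmetric] numeral_2_eq_2 less_Suc_eq)
    moreover have "(\<Sum>i<2. dist (f xs ! i) (f xs ! Suc i)) = l"
      using pq(4) unfolding fx by (simp add: f_def p_def[symmetric] q_def[symmetric] numeral_2_eq_2 dist_midpoint)
    ultimately show ?thesis using pq mX unfolding fx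
      by (simp add: mag_gen_def dist_midpoint)
  qed
  show "\<exists>b. mag_chain X (Suc 1) l b \<and> mag_boundary b = c"
  proof (intro exI conjI)
    show "mag_chain X (Suc 1) l b"
    proof -
      have "finite {zs. b zs \<noteq> 0}" unfolding suppb using fin by (simp add: S_def)
      moreover have "\<forall>zs. b zs \<noteq> 0 \<longrightarrow> mag_gen X (Suc 1) l zs"
      proof (intro allI impI)
        fix zs assume "b zs \<noteq> 0"
        then have "zs \<in> f ` S" using suppb by blast
        then show "mag_gen X (Suc 1) l zs" using genf by blast
      qed
      ultimately show ?thesis unfolding mag_chain_def by blast
    qed
    show "mag_boundary b = c"
    proof
      fix ys
      have "mag_boundary b ys = (\<Sum>xs\<in>S. b (f xs) * bdry_coeff (f xs) ys)"
        unfolding mag_boundary_def suppb using sum.reindex[OF injf] by (simp add: comp_def)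
      also have "\<dots> = (\<Sum>xs\<in>S. c xs * (if ys = xs then 1 else 0))"
      proof (rule sum.cong[OF refl])
        fix xs assume xs: "xs \<in> S"
        have e: "xs = [xs!0, xs!1]" using S2 xs by blast
        have "bdry_coeff (f xs) ys = (if ys = xs then -1 else 0)"
          unfolding f_def bdry3 using e by (auto simp: dist_midpoint)
        then show "b (f xs) * bdry_coeff (f xs) ys = c xs * (if ys = xs then 1 else 0)"
          using bf[OF xs] by simp
      qed
      also have "\<dots> = (\<Sum>xs\<in>S. if ys = xs then c xs else 0)"
        by (rule sum.cong) auto
      also have "\<dots> = (if ys \<in> S then c ys else 0)"
        using fin unfolding S_def by (rule sum.delta')
      also have "\<dots> = c ys" by (simp add: S_def)
      finally show "mag_boundary b ys = c ys" .
    qed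
  qed
qed

end
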